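(* Let $n\ge2$. For every $\Gamma\cup\{\varphi\}\subseteq{\bf F}(\Sigma,\mathcal{V})$: $\Gamma\vdash_{C_n}\varphi$ iff $\Gamma\vDash^{\mathsf{RN}}_{\mathcal{RM}_{C_n}}\varphi$.
   Context: $\Sigma$ has unary $\neg$ and binary $\wedge,\vee,\to$; ${\bf F}(\Sigma,\mathcal{V})$ its formulas over a denumerable set $\mathcal{V}$. $\alpha^0=\alpha$, $\alpha^{k+1}=\neg(\alpha^k\wedge\neg\alpha^k)$; $\alpha^{(1)}=\alpha^1$, $\alpha^{(k+1)}=\alpha^{(k)}\wedge\alpha^{k+1}$. $C_n$ is the Hilbert calculus with Modus Ponens and axiom schemata: $\alpha\to(\beta\to\alpha)$; $(\alpha\to(\beta\to\gamma))\to((\alpha\to\beta)\to(\alpha\to\gamma))$; $\alpha\to(\beta\to(\alpha\wedge\beta))$; $(\alpha\wedge\beta)\to\alpha$; $(\alpha\wedge\beta)\to\beta$; $\alpha\to(\alpha\vee\beta)$; $\beta\to(\alpha\vee\beta)$; $(\alpha\to\gamma)\to((\beta\to\gamma)\to((\alpha\vee\beta)\to\gamma))$; $\alpha\vee\neg\alpha$; $\neg\neg\alpha\to\alpha$; $\alpha^{(n)}\to(\alpha\to(\neg\alpha\to\beta))$; $(\alpha^{(n)}\wedge\beta^{(n)})\to((\alpha\wedge\beta)^{(n)}\wedge(\alpha\vee\beta)^{(n)}\wedge(\alpha\to\beta)^{(n)})$. $B_n=\{z\in\{0,1\}^{n+1}:(z_1\wedge\dots\wedge z_k)\vee z_{k+1}=1\text{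 for all }1\le k\le n\}$, with elements $T_n=(1,0,1,\dots,1)$, $t^n_i$ ($0\le i\le n-2$) having $z_1=z_2=1$ and a single $0$ at coordinate $i+3$, $t^n_{n-1}=(1,\dots,1)$, $F_n=(0,1,\dots,1)$. $D_n=\{z:z_1=1\}$, $Boo_n=\{T_n,F_n\}$, $I_n=B_n\setminus Boo_n$. $\mathcal{A}_{C_n}$ on $B_n$: $\tilde\neg z=\{w\in B_n:w_1=z_2,\ w_2\le z_1\}$; for $\#\in\{\wedge,\vee,\to\}$, $z\tilde\#w=\{u\in Boo_n:u_1=z_1\#w_1\}$ if $z,w\in Boo_n$, else $\{u\in B_n:u_1=z_1\#w_1\}$. A valuation is $\nu$ with $\nu(\neg\alpha)\in\tilde\neg\nu(\alpha)$, $\nu(\alpha\#\beta)\in\nu(\alpha)\tilde\#\nu(\beta)$. $\mathcal{F}_{C_n}$: valuations with $\nu(\alpha)=t^n_0\Rightarrow\nu(\alpha\wedge\neg\alpha)=T_n$, and for $1\le k\le n-1$, $\nu(\alpha)=t^n_k\Rightarrow(\nu(\alpha\wedge\neg\alpha)\in I_n$ and $\nu(\alpha^1)=t^n_{k-1})$. $\mathcal{RM}_{C_n}=(\mathcal{A}_{C_n},D_n,\mathcal{F}_{C_n})$; $\Gamma\vDash^{\mathsf{RN}}_{\mathcal{RM}_{C_n}}\varphi$ iff every $\nu\in\mathcal{F}_{C_n}$ with $\nu[\Gamma]\subseteq D_n$ has $\nu(\varphi)\in D_n$. *)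

theory Defs
  imports Main
begin

datatype fm = Var nat | Neg fm | Conj fm fm | Disj fm fm | Imp fm fm

fun cpow :: "fm \<Rightarrow> nat \<Rightarrow> fm" where
  "cpow a 0 = a"
| "cpow a (Suc k) = Neg (Conj (cpow a k) (Neg (cpow a k)))"

text \<open>alpha^(k), meaningful for k \<ge> 1\<close>
fun cwb :: "fm \<Rightarrow> nat \<Rightarrow> fm" where
  "cwb a 0 = cpow a 1"
| "cwb a (Suc 0) = cpow a 1"
| "cwb a (Suc (Suc k)) = Conj (cwb a (Suc k)) (cpow a (Suc (Suc k)))"

inductive Cax :: "nat \<Rightarrow> fm \<Rightarrow> bool" for n :: nat where
  A1: "Cax n (Imp a (Imp b a))"
| A2: "Cax n (Imp (Imp a (Imp b c)) (Imp (Imp a b) (Imp a c)))"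
| A3: "Cax n (Imp a (Imp b (Conj a b)))"
| A4: "Cax n (Imp (Conj a b) a)"
| A5: "Cax n (Imp (Conj a b) b)"
| A6: "Cax n (Imp a (Disj a b))"
| A7: "Cax n (Imp b (Disj a b))"
| A8: "Cax n (Imp (Imp a c) (Imp (Imp b c) (Imp (Disj a b) c)))"
| A9: "Cax n (Disj a (Neg a))"
| A10: "Cax n (Imp (Neg (Neg a)) a)"
| A11: "Cax n (Imp (cwb a n) (Imp a (Imp (Neg a) b)))"
| A12: "Cax n (Imp (Conj (cwb a n) (cwb b n))
            (Conj (cwb (Conj a b) n) (Conj (cwb (Disj a b) n) (cwb (Imp a b) n))))"

inductive Cder :: "nat \<Rightarrow> fm set \<Rightarrow> fm \<Rightarrow> bool" for n :: nat and \<Gamma> :: "fm set" where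
  prem: "a \<in> \<Gamma> \<Longrightarrow> Cder n \<Gamma> a"
| ax: "Cax n a \<Longrightarrow> Cder n \<Gamma> a"
| mp: "Cder n \<Gamma> a \<Longrightarrow> Cder n \<Gamma> (Imp a b) \<Longrightarrow> Cder n \<Gamma> b"

text \<open>Truth values: z \<in> {0,1}^(n+1) as bool lists of length n+1;
  coordinate z_j is z ! (j - 1).\<close>
definition Bn :: "nat \<Rightarrow> bool list set" where
  "Bn n = {z. length z = Suc n \<and>
     (\<forall>k. 1 \<le> k \<and> k \<le> n \<longrightarrow> (\<forall>i<k. z ! i) \<or> z ! k)}"

definition Tn :: "nat \<Rightarrow> bool list" where
  "Tn n = True # False # replicate (n - 1) True"

definition Fn :: "nat \<Rightarrow> bool list" where
  "Fn n = False # replicate n True"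

text \<open>t^n_i: for i \<le> n-2 all ones except a 0 at coordinate i+3; t^n_(n-1) all ones\<close>
definition tn :: "nat \<Rightarrow> nat \<Rightarrow> bool list" where
  "tn n i = (if i = n - 1 then replicate (Suc n) True
             else (replicate (Suc n) True)[Suc (Suc i) := False])"

definition Dn :: "nat \<Rightarrow> bool list set" where
  "Dn n = {z \<in> Bn n. z ! 0}"

definition Boo :: "nat \<Rightarrow> bool list set" where
  "Boo n = {Tn n, Fn n}"

definition In :: "nat \<Rightarrow> bool list set" where
  "In n = Bn n - Boo n"

definition negM :: "nat \<Rightarrow> bool list \<Rightarrow> bool list set" where
  "negM n z = {w \<in> Bn n. w ! 0 = z ! 1 \<and> (w ! 1 \<longrightarrow> z ! 0)}"

definition binM :: "nat \<Rightarrow> (bool \<Rightarrow> bool \<Rightarrow> bool) \<Rightarrow> bool list \<Rightarrow> bool list \<Rightarrow> bool list set" where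
  "binM n f z w = (if z \<in> Boo n \<and> w \<in> Boo n
                    then {u \<in> Boo n. u ! 0 = f (z ! 0) (w ! 0)}
                    else {u \<in> Bn n. u ! 0 = f (z ! 0) (w ! 0)})"

definition valuation :: "nat \<Rightarrow> (fm \<Rightarrow> bool list) \<Rightarrow> bool" where
  "valuation n v \<longleftrightarrow> (\<forall>a. v a \<in> Bn n) \<and>
     (\<forall>a. v (Neg a) \<in> negM n (v a)) \<and>
     (\<forall>a b. v (Conj a b) \<in> binM n (\<and>) (v a) (v b)) \<and>
     (\<forall>a b. v (Disj a b) \<in> binM n (\<or>) (v a) (v b)) \<and>
     (\<forall>a b. v (Imp a b) \<in> binM n (\<longrightarrow>) (v a) (v b))"

definition FC :: "nat \<Rightarrow> (fm \<Rightarrow> bool list) set" where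
  "FC n = {v. valuation n v \<and>
     (\<forall>a. v a = tn n 0 \<longrightarrow> v (Conj a (Neg a)) = Tn n) \<and>
     (\<forall>a k. 1 \<le> k \<and> k \<le> n - 1 \<and> v a = tn n k \<longrightarrow>
        v (Conj a (Neg a)) \<in> In n \<and> v (cpow a 1) = tn n (k - 1))}"

definition RNcons :: "nat \<Rightarrow> fm set \<Rightarrow> fm \<Rightarrow> bool" where
  "RNcons n \<Gamma> \<phi> \<longleftrightarrow> (\<forall>v \<in> FC n. (\<forall>g \<in> \<Gamma>. v g \<in> Dn n) \<longrightarrow> v \<phi> \<in> Dn n)"

end

theory Submission
  imports Defs
begin


lemma Cder_mono: "Cder n \<Gamma> a \<Longrightarrow> \<Gamma> \<subseteq> \<Delta> \<Longrightarrow> Cder n \<Delta> a"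
proof (induction rule: Cder.induct)
  case (prem a) then show ?case by (blast intro: Cder.prem)
next
  case (ax a) then show ?case by (blast intro: Cder.ax)
next
  case (mp a b) then show ?case by (blast intro: Cder.mp)
qed

lemma imp_refl: "Cder n \<Gamma> (Imp a a)"
proof -
  have 1: "Cder n \<Gamma> (Imp (Imp a (Imp (Imp a a) a)) (Imp (Imp a (Imp a a)) (Imp a a)))"
    by (rule Cder.ax, rule Cax.A2)
  have 2: "Cder n \<Gamma> (Imp a (Imp (Imp a a) a))" by (rule Cder.ax, rule Cax.A1)
  have 3: "Cder n \<Gamma> (Imp a (Imp a a))" by (rule Cder.ax, rule Cax.A1)
  show ?thesis using Cder.mp[OF 3 Cder.mp[OF 2 1]] .
qed

lemma DT: "Cder n (insert a \<Gamma>) b \<Longrightarrow> Cder n \<Gamma> (Imp a b)"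
proof (induction rule: Cder.induct)
  case (prem c)
  show ?case
  proof (cases "c = a")
    case True then show ?thesis using imp_refl by simp
  next
    case False
    then have "Cder n \<Gamma> c" using prem by (auto intro: Cder.prem)
    have "Cder n \<Gamma> (Imp c (Imp a c))" by (rule Cder.ax, rule Cax.A1)
    then show ?thesis using \<open>Cder n \<Gamma> c\<close> by (rule Cder.mp[rotated])
  qed
next
  case (ax c)
  have "Cder n \<Gamma> (Imp c (Imp a c))" by (rule Cder.ax, rule Cax.A1)
  then show ?case using Cder.ax[OF ax] by (rule Cder.mp[rotated])
next
  case (mp c d)
  have "Cder n \<Gamma> (Imp (Imp a (Imp c d)) (Imp (Imp a c) (Imp a d)))" by (rule Cder.ax, rule Cax.A2)
  then show ?case using mp.IH by (blast intro: Cder.mp)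
qed

lemma cut: "Cder n \<Gamma> a \<Longrightarrow> Cder n (insert a \<Gamma>) b \<Longrightarrow> Cder n \<Gamma> b"
  using DT[of n a \<Gamma> b] by (blast intro: Cder.mp)

lemma compact: "Cder n \<Gamma> a \<Longrightarrow> \<exists>\<Gamma>0. finite \<Gamma>0 \<and> \<Gamma>0 \<subseteq> \<Gamma> \<and> Cder n \<Gamma>0 a"
proof (induction rule: Cder.induct)
  case (prem a)
  then show ?case by (intro exI[of _ "{a}"]) (auto intro: Cder.prem)
next
  case (ax a)
  then show ?case by (intro exI[of _ "{}"]) (auto intro: Cder.ax)
next
  case (mp a b)
  then obtain G1 G2 where "finite G1" "G1 \<subseteq> \<Gamma>" "Cder n G1 a" "finite G2" "G2 \<subseteq> \<Gamma>" "Cder n G2 (Imp a b)"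
    by blast
  then show ?case
  proof (intro exI[of _ "G1 \<union> G2"] conjI)
    show "Cder n (G1 \<union> G2) b"
      using Cder_mono[OF \<open>Cder n G1 a\<close>, of "G1 \<union> G2"] Cder_mono[OF \<open>Cder n G2 (Imp a b)\<close>, of "G1 \<union> G2"]
      by (blast intro: Cder.mp)
  qed (use \<open>finite G1\<close> \<open>finite G2\<close> \<open>G1 \<subseteq> \<Gamma>\<close> \<open>G2 \<subseteq> \<Gamma>\<close> in auto)
qed

lemma lindenbaum:
  assumes "\<not> Cder n \<Gamma> \<phi>"
  shows "\<exists>M. \<Gamma> \<subseteq> M \<and> \<not> Cder n M \<phi> \<and> (\<forall>a. a \<notin> M \<longrightarrow> Cder n (insert a M) \<phi>)"
proof -
  let ?A = "{D. \<Gamma> \<subseteq> D \<and> \<not> Cder n D \<phi>}"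
  have "\<forall>C\<in>chains ?A. \<exists>U\<in>?A. \<forall>X\<in>C. X \<subseteq> U"
  proof
    fix C assume C: "C \<in> chains ?A"
    show "\<exists>U\<in>?A. \<forall>X\<in>C. X \<subseteq> U"
    proof (cases "C = {}")
      case True
      have "\<Gamma> \<in> ?A" using assms by simp
      then show ?thesis using True by blast
    next
      case False
      have "\<not> Cder n (\<Union>C) \<phi>"
      proof
        assume "Cder n (\<Union>C) \<phi>"
        from compact[OF this] obtain G where G: "finite G" "G \<subseteq> \<Union>C" "Cder n G \<phi>" by blast
        have ch: "subset.chain ?A C" using C by (simp add: chains_alt_def)
        obtain B where "B \<in> C" "G \<subseteq> B"
          using finite_subset_Union_chain[OF G(1) G(2) False ch] by blast
        then have "Cder n B \<phi>" using Cder_mono[OF G(3)] by simp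
        moreover have "B \<in> ?A" using \<open>B \<in> C\<close> chainsD2[OF C] by (rule subsetD[rotated])
        ultimately show False by simp
      qed
      moreover have "\<Gamma> \<subseteq> \<Union>C"
      proof -
        obtain X where "X \<in> C" using False by blast
        then have "X \<in> ?A" using chainsD2[OF C] by (rule subsetD[rotated])
        then show ?thesis using \<open>X \<in> C\<close> by blast
      qed
      ultimately have "\<Union>C \<in> ?A" by simp
      then show ?thesis by blast
    qed
  qed
  from Zorn_Lemma2[OF this] obtain M where M: "M \<in> ?A" "\<forall>X\<in>?A. M \<subseteq> X \<longrightarrow> X = M" by blast
  have "\<forall>a. a \<notin> M \<longrightarrow> Cder n (insert a M) \<phi>"
  proof (intro allI impI)
    fix a assume "a \<notin> M"
    show "Cder n (insert a M) \<phi>"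
    proof (rule ccontr)
      assume "\<not> Cder n (insert a M) \<phi>"
      then have "insert a M \<in> ?A" using M(1) by auto
      then have "insert a M = M" using M(2) by blast
      then show False using \<open>a \<notin> M\<close> by blast
    qed
  qed
  then show ?thesis using M(1) by blast
qed




definition maxt :: "nat \<Rightarrow> fm set \<Rightarrow> fm \<Rightarrow> bool" where
  "maxt n M \<phi> \<longleftrightarrow> \<not> Cder n M \<phi> \<and> (\<forall>a. a \<notin> M \<longrightarrow> Cder n (insert a M) \<phi>)"

lemma cpow_add: "cpow (cpow a j) k = cpow a (j + k)"
  by (induction k) auto

lemma cpow_Suc1: "cpow a (Suc j) = cpow (cpow a j) 1"
  by simp

lemma cwb_gen:
  assumes "\<And>x y. P (Conj x y) \<longleftrightarrow> P x \<and> P y"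
  shows "P (cwb a (Suc m)) \<longleftrightarrow> (\<forall>k. 1 \<le> k \<and> k \<le> Suc m \<longrightarrow> P (cpow a k))"
proof (induction m)
  case 0
  have "(\<forall>k. 1 \<le> k \<and> k \<le> Suc 0 \<longrightarrow> P (cpow a k)) \<longleftrightarrow> P (cpow a 1)"
    by (metis le_antisym One_nat_def order_refl)
  then show ?case by simp
next
  case (Suc m)
  have "P (cwb a (Suc (Suc m))) \<longleftrightarrow> P (cwb a (Suc m)) \<and> P (cpow a (Suc (Suc m)))"
    using assms by simp
  also have "\<dots> \<longleftrightarrow> (\<forall>k. 1 \<le> k \<and> k \<le> Suc (Suc m) \<longrightarrow> P (cpow a k))"
    using Suc.IH le_Suc_eq by auto
  finally show ?case .
qed

context
  fixes n M \<phi>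
  assumes mx: "maxt n M \<phi>"
begin

lemma notder: "\<not> Cder n M \<phi>" using mx by (simp add: maxt_def)

lemma ins: "a \<notin> M \<Longrightarrow> Cder n (insert a M) \<phi>" using mx by (simp add: maxt_def)

lemma closed: "Cder n M a \<Longrightarrow> a \<in> M"
proof (rule ccontr)
  assume "Cder n M a" "a \<notin> M"
  then have "Cder n M \<phi>" using cut ins by blast
  then show False using notder by simp
qed

lemma ax_in: "Cax n a \<Longrightarrow> a \<in> M"
  by (rule closed, rule Cder.ax)

lemma mpM: "a \<in> M \<Longrightarrow> Imp a b \<in> M \<Longrightarrow> b \<in> M"
proof -
  assume "a \<in> M" "Imp a b \<in> M"
  then have "Cder n M a" "Cder n M (Imp a b)" by (auto intro: Cder.prem)
  then show "b \<in> M" by (intro closed) (rule Cder.mp)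
qed

lemma conjM: "Conj a b \<in> M \<longleftrightarrow> a \<in> M \<and> b \<in> M"
proof
  assume "Conj a b \<in> M"
  then show "a \<in> M \<and> b \<in> M" using mpM ax_in Cax.A4 Cax.A5 by blast
next
  assume "a \<in> M \<and> b \<in> M"
  then show "Conj a b \<in> M" using mpM ax_in[OF Cax.A3[of n a b]] by blast
qed

lemma disjM: "Disj a b \<in> M \<longleftrightarrow> a \<in> M \<or> b \<in> M"
proof
  assume d: "Disj a b \<in> M"
  show "a \<in> M \<or> b \<in> M"
  proof (rule ccontr)
    assume "\<not> (a \<in> M \<or> b \<in> M)"
    then have 1: "Cder n M (Imp a \<phi>)" "Cder n M (Imp b \<phi>)" using ins DT by blast+
    have 2: "Cder n M (Imp (Imp a \<phi>) (Imp (Imp b \<phi>) (Imp (Disj a b) \<phi>)))" by (rule Cder.ax, rule Cax.A8)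
    have 3: "Cder n M (Disj a b)" using d by (rule Cder.prem)
    have "Cder n M \<phi>" using Cder.mp[OF 3 Cder.mp[OF 1(2) Cder.mp[OF 1(1) 2]]] .
    then show False using notder by simp
  qed
next
  assume "a \<in> M \<or> b \<in> M"
  then show "Disj a b \<in> M" using mpM ax_in[OF Cax.A6[of n a b]] ax_in[OF Cax.A7[of n b a]] by blast
qed

lemma emM: "a \<in> M \<or> Neg a \<in> M"
  using disjM ax_in[OF Cax.A9[of n a]] by blast

lemma nnM: "Neg (Neg a) \<in> M \<Longrightarrow> a \<in> M"
  using mpM ax_in[OF Cax.A10[of n a]] by blast

lemma a11M: "cwb a n \<in> M \<Longrightarrow> a \<in> M \<Longrightarrow> Neg a \<in> M \<Longrightarrow> False"
proof -
  assume "cwb a n \<in> M" "a \<in> M" "Neg a \<in> M"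
  then have "\<phi> \<in> M" using mpM ax_in[OF Cax.A11[of n a \<phi>]] by blast
  then show False using notder Cder.prem by blast
qed

lemma good_step: "a \<notin> M \<or> Neg a \<notin> M \<Longrightarrow> cpow a 1 \<in> M \<and> Neg (cpow a 1) \<notin> M"
proof -
  assume g: "a \<notin> M \<or> Neg a \<notin> M"
  then have c: "Conj a (Neg a) \<notin> M" using conjM by blast
  then have "Neg (Conj a (Neg a)) \<in> M" using emM by blast
  moreover have "Neg (Neg (Conj a (Neg a))) \<notin> M" using c nnM by blast
  ultimately show ?thesis by simp
qed

lemma good_all: "a \<notin> M \<or> Neg a \<notin> M \<Longrightarrow> 1 \<le> j \<Longrightarrow> cpow a j \<in> M \<and> Neg (cpow a j) \<notin> M"
proof (induction j)
  case 0 then show ?case by simp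
next
  case (Suc j)
  show ?case
  proof (cases "j = 0")
    case True then show ?thesis using good_step Suc.prems by simp
  next
    case False
    then have "cpow a j \<in> M \<and> Neg (cpow a j) \<notin> M" using Suc by simp
    then have "cpow (cpow a j) 1 \<in> M \<and> Neg (cpow (cpow a j) 1) \<notin> M" using good_step by blast
    then show ?thesis by simp
  qed
qed

lemma cwbM: "1 \<le> n \<Longrightarrow> cwb a n \<in> M \<longleftrightarrow> (\<forall>k. 1 \<le> k \<and> k \<le> n \<longrightarrow> cpow a k \<in> M)"
  using cwb_gen[of "\<lambda>x. x \<in> M" a "n - 1"] conjM by simp

lemma good_cwb: "1 \<le> n \<Longrightarrow> a \<notin> M \<or> Neg a \<notin> M \<Longrightarrow> cwb a n \<in> M"
  using cwbM good_all by blast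

lemma impM: "1 \<le> n \<Longrightarrow> Imp a b \<in> M \<longleftrightarrow> a \<notin> M \<or> b \<in> M"
proof
  assume "Imp a b \<in> M" then show "a \<notin> M \<or> b \<in> M" using mpM by blast
next
  assume n1: "1 \<le> n" and h: "a \<notin> M \<or> b \<in> M"
  show "Imp a b \<in> M"
  proof (cases "b \<in> M")
    case True then show ?thesis using mpM ax_in[OF Cax.A1[of n b a]] by blast
  next
    case False
    then have a: "a \<notin> M" using h by simp
    then have na: "Neg a \<in> M" using emM by blast
    have "cwb a n \<in> M" using good_cwb[OF n1] a by blast
    then have i: "Imp a (Imp (Neg a) b) \<in> M" using mpM ax_in[OF Cax.A11[of n a b]] by blast
    have "Cder n (insert a M) b"
    proof -
      have 1: "Cder n (insert a M) (Imp a (Imp (Neg a) b))" using i by (auto intro: Cder.prem)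
      have 2: "Cder n (insert a M) a" by (auto intro: Cder.prem)
      have 3: "Cder n (insert a M) (Neg a)" using na by (auto intro: Cder.prem)
      show ?thesis using Cder.mp[OF 3 Cder.mp[OF 2 1]] .
    qed
    then show ?thesis using DT closed by blast
  qed
qed

end



lemma len_Tn: "1 \<le> n \<Longrightarrow> length (Tn n) = Suc n" by (simp add: Tn_def)
lemma len_Fn: "length (Fn n) = Suc n" by (simp add: Fn_def)
lemma len_tn: "length (tn n i) = Suc n" by (simp add: tn_def)

lemma Tn_nth: "1 \<le> n \<Longrightarrow> j \<le> n \<Longrightarrow> Tn n ! j = (j \<noteq> 1)"
  by (cases j; cases "j - 1") (auto simp: Tn_def nth_Cons')

lemma Fn_nth: "j \<le> n \<Longrightarrow> Fn n ! j = (j \<noteq> 0)"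
  by (cases j) (auto simp: Fn_def)

lemma tn_nth: "j \<le> n \<Longrightarrow> tn n i ! j = (i = n - 1 \<or> j \<noteq> Suc (Suc i))"
  by (auto simp del: replicate_Suc simp add: tn_def nth_list_update)

lemma list_eqI: "length xs = Suc n \<Longrightarrow> length ys = Suc n \<Longrightarrow> (\<And>j. j \<le> n \<Longrightarrow> xs ! j = ys ! j) \<Longrightarrow> xs = ys"
  by (rule nth_equalityI) auto

lemma BnD: "z \<in> Bn n \<Longrightarrow> 1 \<le> k \<Longrightarrow> k \<le> n \<Longrightarrow> (\<forall>i<k. z ! i) \<or> z ! k"
  by (simp add: Bn_def)

lemma Bn_len: "z \<in> Bn n \<Longrightarrow> length z = Suc n"
  by (simp add: Bn_def)

lemma Bn_01: "z \<in> Bn n \<Longrightarrow> 1 \<le> n \<Longrightarrow> z ! 0 \<or> z ! 1"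
  using BnD[of z n 1] by auto

lemma Bn_T: "1 \<le> n \<Longrightarrow> z \<in> Bn n \<Longrightarrow> z ! 0 \<Longrightarrow> \<not> z ! 1 \<Longrightarrow> z = Tn n"
proof (rule list_eqI[of _ n])
  assume n: "1 \<le> n" and z: "z \<in> Bn n" "z ! 0" "\<not> z ! 1"
  show "length z = Suc n" using z Bn_len by blast
  show "length (Tn n) = Suc n" using n len_Tn by blast
  fix j assume j: "j \<le> n"
  show "z ! j = Tn n ! j"
  proof (cases "j \<le> 1")
    case True then show ?thesis using z n j Tn_nth by (cases j) auto
  next
    case False
    have "(\<forall>i<j. z ! i) \<or> z ! j" using BnD[OF z(1), of j] False j by simp
    then have "z ! j" using z(3) False by auto
    then show ?thesis using Tn_nth[OF n j] False by simp
  qed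
qed

lemma Bn_F: "1 \<le> n \<Longrightarrow> z \<in> Bn n \<Longrightarrow> \<not> z ! 0 \<Longrightarrow> z = Fn n"
proof (rule list_eqI[of _ n])
  assume n: "1 \<le> n" and z: "z \<in> Bn n" "\<not> z ! 0"
  show "length z = Suc n" using z Bn_len by blast
  show "length (Fn n) = Suc n" using len_Fn by blast
  fix j assume j: "j \<le> n"
  show "z ! j = Fn n ! j"
  proof (cases "j = 0")
    case True then show ?thesis using z Fn_nth by simp
  next
    case False
    have "(\<forall>i<j. z ! i) \<or> z ! j" using BnD[OF z(1), of j] False j by simp
    then have "z ! j" using z(2) False by auto
    then show ?thesis using Fn_nth[OF j] False by simp
  qed
qed

lemma Bn_both: "2 \<le> n \<Longrightarrow> z \<in> Bn n \<Longrightarrow> z ! 0 \<Longrightarrow> z ! 1 \<Longrightarrow> \<exists>i\<le>n-1. z = tn n i"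
proof -
  assume n: "2 \<le> n" and z: "z \<in> Bn n" "z ! 0" "z ! 1"
  have lz: "length z = Suc n" using z Bn_len by blast
  show ?thesis
  proof (cases "\<forall>j\<le>n. z ! j")
    case True
    have "z = tn n (n - 1)"
      by (rule list_eqI[OF lz len_tn]) (simp add: True tn_nth)
    then show ?thesis by blast
  next
    case False
    define j where "j = (LEAST j. j \<le> n \<and> \<not> z ! j)"
    have ex: "\<exists>j. j \<le> n \<and> \<not> z ! j" using False by blast
    have jp: "j \<le> n \<and> \<not> z ! j" unfolding j_def by (rule LeastI_ex[OF ex])
    have jl: "z ! m" if "m < j" for m
    proof -
      have "\<not> (m \<le> n \<and> \<not> z ! m)" using not_less_Least[of m "\<lambda>j. j \<le> n \<and> \<not> z ! j"] that
        unfolding j_def by blast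
      moreover have "m \<le> n" using that jp by simp
      ultimately show ?thesis by blast
    qed
    have j2: "2 \<le> j"
    proof (rule ccontr)
      assume "\<not> 2 \<le> j"
      then have "j = 0 \<or> j = 1" by auto
      then show False using jp z by auto
    qed
    have "z = tn n (j - 2)"
    proof (rule list_eqI[OF lz len_tn])
      fix m assume m: "m \<le> n"
      have ne: "j - 2 \<noteq> n - 1" using jp j2 n by linarith
      have "z ! m = (m \<noteq> j)"
      proof (cases "m < j")
        case True then show ?thesis using jl by simp
      next
        case False
        show ?thesis
        proof (cases "m = j")
          case True then show ?thesis using jp by simp
        next
          case False2: False
          then have "j < m" using False by simp
          have "(\<forall>i<m. z ! i) \<or> z ! m" using BnD[OF z(1), of m] m \<open>j < m\<close> by simp
          then show ?thesis using jp \<open>j < m\<close> False2 by auto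
        qed
      qed
      moreover have "tn n (j - 2) ! m = (m \<noteq> j)"
      proof -
        have "Suc (Suc (j - 2)) = j" using j2 by simp
        then show ?thesis using tn_nth[OF m, of "j - 2"] ne by simp
      qed
      ultimately show "z ! m = tn n (j - 2) ! m" by simp
    qed
    moreover have "j - 2 \<le> n - 1" using jp by linarith
    ultimately show ?thesis by blast
  qed
qed

lemma Tn_01: "1 \<le> n \<Longrightarrow> Tn n ! 0 \<and> \<not> Tn n ! 1" using Tn_nth by auto
lemma Tn_Bn: "1 \<le> n \<Longrightarrow> Tn n \<in> Bn n"
proof -
  assume n: "1 \<le> n"
  have "(\<forall>i<k. Tn n ! i) \<or> Tn n ! k" if "1 \<le> k" "k \<le> n" for k
  proof (cases "k = 1")
    case True
    then show ?thesis using Tn_01[OF n] by simp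
  next
    case False
    then show ?thesis using Tn_nth[OF n that(2)] by simp
  qed
  then show ?thesis unfolding Bn_def using len_Tn[OF n] by simp
qed

lemma Fn_Bn: "Fn n \<in> Bn n"
proof -
  have "(\<forall>i<k. Fn n ! i) \<or> Fn n ! k" if "1 \<le> k" "k \<le> n" for k
    using Fn_nth[OF that(2)] that by simp
  then show ?thesis unfolding Bn_def using len_Fn by simp
qed

lemma Boo_Bn: "1 \<le> n \<Longrightarrow> z \<in> Boo n \<Longrightarrow> z \<in> Bn n"
  unfolding Boo_def using Tn_Bn Fn_Bn by blast

lemma Fn_0: "\<not> Fn n ! 0" by (simp add: Fn_def)
lemma Fn_1: "1 \<le> n \<Longrightarrow> Fn n ! 1" using Fn_nth by auto

lemma Boo_iff: "1 \<le> n \<Longrightarrow> z \<in> Bn n \<Longrightarrow> z \<in> Boo n \<longleftrightarrow> \<not> (z ! 0 \<and> z ! 1)"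
proof
  assume n: "1 \<le> n" and z: "z \<in> Bn n" "z \<in> Boo n"
  then have "z = Tn n \<or> z = Fn n" by (simp add: Boo_def)
  then show "\<not> (z ! 0 \<and> z ! 1)" using Tn_01[OF n] Fn_0 by blast
next
  assume n: "1 \<le> n" and z: "z \<in> Bn n" and h: "\<not> (z ! 0 \<and> z ! 1)"
  show "z \<in> Boo n"
  proof (cases "z ! 0")
    case True
    then have "z = Tn n" using Bn_T[OF n z] h by blast
    then show ?thesis by (simp add: Boo_def)
  next
    case False
    then have "z = Fn n" using Bn_F[OF n z] by blast
    then show ?thesis by (simp add: Boo_def)
  qed
qed




lemma binM_0: "u \<in> binM n f z w \<Longrightarrow> u ! 0 = f (z ! 0) (w ! 0)"
  by (auto simp: binM_def split: if_splits)

lemma binM_Boo: "z \<in> Boo n \<Longrightarrow> w \<in> Boo n \<Longrightarrow> u \<in> binM n f z w \<Longrightarrow> u \<in> Boo n"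
  by (auto simp: binM_def)

lemma negM_Tn: "1 \<le> n \<Longrightarrow> u \<in> negM n (Tn n) \<Longrightarrow> u = Fn n"
proof -
  assume n: "1 \<le> n" and u: "u \<in> negM n (Tn n)"
  then have "u \<in> Bn n" "\<not> u ! 0" using Tn_01[OF n] by (auto simp: negM_def)
  then show ?thesis using Bn_F[OF n] by blast
qed

lemma negM_Fn: "1 \<le> n \<Longrightarrow> u \<in> negM n (Fn n) \<Longrightarrow> u = Tn n"
proof -
  assume n: "1 \<le> n" and u: "u \<in> negM n (Fn n)"
  then have "u \<in> Bn n" "u ! 0" "\<not> u ! 1" using Fn_1[OF n] Fn_0[of n] by (auto simp: negM_def)
  then show ?thesis using Bn_T[OF n] by blast
qed

context
  fixes n v
  assumes n2: "2 \<le> n" and vF: "v \<in> FC n"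
begin

lemma n1: "1 \<le> n" using n2 by simp

lemma vval: "valuation n v" using vF by (simp add: FC_def)

lemma vB: "v x \<in> Bn n" using vval by (simp add: valuation_def)

lemma vNeg: "v (Neg a) \<in> negM n (v a)" using vval by (simp add: valuation_def)
lemma vConj: "v (Conj a b) \<in> binM n (\<and>) (v a) (v b)" using vval by (simp add: valuation_def)
lemma vDisj: "v (Disj a b) \<in> binM n (\<or>) (v a) (v b)" using vval by (simp add: valuation_def)
lemma vImp: "v (Imp a b) \<in> binM n (\<longrightarrow>) (v a) (v b)" using vval by (simp add: valuation_def)

lemma dConj: "v (Conj a b) ! 0 = (v a ! 0 \<and> v b ! 0)" using binM_0[OF vConj] .
lemma dDisj: "v (Disj a b) ! 0 = (v a ! 0 \<or> v b ! 0)" using binM_0[OF vDisj] .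
lemma dImp: "v (Imp a b) ! 0 = (v a ! 0 \<longrightarrow> v b ! 0)" using binM_0[OF vImp] .
lemma dNeg: "v (Neg a) ! 0 = v a ! 1" using vNeg by (simp add: negM_def)
lemma dNeg1: "v (Neg a) ! 1 \<Longrightarrow> v a ! 0" using vNeg by (simp add: negM_def)

lemma FC0: "v a = tn n 0 \<Longrightarrow> v (Conj a (Neg a)) = Tn n" using vF by (simp add: FC_def)
lemma FCk: "1 \<le> k \<Longrightarrow> k \<le> n - 1 \<Longrightarrow> v a = tn n k \<Longrightarrow> v (Conj a (Neg a)) \<in> In n \<and> v (cpow a 1) = tn n (k - 1)"
  using vF unfolding FC_def by blast

lemma boo_neg: "v a \<in> Boo n \<Longrightarrow> v (Neg a) \<in> Boo n \<and> v (Neg a) ! 0 = (\<not> v a ! 0)"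
proof -
  assume "v a \<in> Boo n"
  then have "v a = Tn n \<or> v a = Fn n" by (simp add: Boo_def)
  then show ?thesis
  proof
    assume h: "v a = Tn n"
    then have "v (Neg a) = Fn n" using negM_Tn[OF n1] vNeg by metis
    then show ?thesis using h Tn_01[OF n1] Fn_0[of n] by (simp add: Boo_def)
  next
    assume h: "v a = Fn n"
    then have "v (Neg a) = Tn n" using negM_Fn[OF n1] vNeg by metis
    then show ?thesis using h Tn_01[OF n1] Fn_0[of n] by (simp add: Boo_def)
  qed
qed

lemma boo_cpow1: "v a \<in> Boo n \<Longrightarrow> v (cpow a 1) = Tn n"
proof -
  assume b: "v a \<in> Boo n"
  have bn: "v (Neg a) \<in> Boo n" "v (Neg a) ! 0 = (\<not> v a ! 0)" using boo_neg[OF b] by auto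
  have "v (Conj a (Neg a)) \<in> Boo n" using binM_Boo[OF b bn(1) vConj] .
  moreover have "\<not> v (Conj a (Neg a)) ! 0" using dConj bn(2) by simp
  ultimately have "v (Conj a (Neg a)) = Fn n" using Tn_01[OF n1] by (auto simp: Boo_def)
  then have "v (Neg (Conj a (Neg a))) = Tn n" using negM_Fn[OF n1] vNeg by metis
  then show ?thesis by simp
qed

lemma boo_cpow: "v a \<in> Boo n \<Longrightarrow> 1 \<le> k \<Longrightarrow> v (cpow a k) = Tn n"
proof (induction k)
  case 0 then show ?case by simp
next
  case (Suc k)
  show ?case
  proof (cases "k = 0")
    case True then show ?thesis using boo_cpow1 Suc.prems by simp
  next
    case False
    then have "v (cpow a k) = Tn n" using Suc by simp
    then have "v (cpow a k) \<in> Boo n" by (simp add: Boo_def)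
    then have "v (cpow (cpow a k) 1) = Tn n" by (rule boo_cpow1)
    then show ?thesis by simp
  qed
qed

lemma dcwb: "v (cwb a n) ! 0 \<longleftrightarrow> (\<forall>k. 1 \<le> k \<and> k \<le> n \<longrightarrow> v (cpow a k) ! 0)"
  using cwb_gen[of "\<lambda>x. v x ! 0" a "n - 1"] dConj n1 by simp

lemma boo_cwb: "v a \<in> Boo n \<Longrightarrow> v (cwb a n) ! 0"
  using dcwb boo_cpow Tn_01[OF n1] by simp

lemma tchain: "i \<le> n - 1 \<Longrightarrow> v a = tn n i \<Longrightarrow> \<not> v (cpow a (Suc i)) ! 0"
proof (induction i arbitrary: a)
  case 0
  then have "v (Conj a (Neg a)) = Tn n" using FC0 by simp
  then have "v (Neg (Conj a (Neg a))) ! 0 = False" using dNeg Tn_01[OF n1] by metis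
  then show ?case by simp
next
  case (Suc i)
  then have "v (cpow a 1) = tn n i" using FCk[of "Suc i" a] by simp
  then have "\<not> v (cpow (cpow a 1) (Suc i)) ! 0" using Suc.IH Suc.prems(1) by simp
  then show ?case using cpow_add[of a 1 "Suc i"] by simp
qed

lemma nboo_cwb: "v a \<notin> Boo n \<Longrightarrow> \<not> v (cwb a n) ! 0"
proof -
  assume "v a \<notin> Boo n"
  then have "v a ! 0" "v a ! 1" using Boo_iff[OF n1 vB] by auto
  then obtain i where i: "i \<le> n - 1" "v a = tn n i" using Bn_both[OF n2 vB] by blast
  then have "\<not> v (cpow a (Suc i)) ! 0" using tchain by blast
  moreover have "1 \<le> Suc i \<and> Suc i \<le> n" using i n2 by simp
  ultimately show ?thesis using dcwb by blast
qed

lemma ax_sound: "Cax n x \<Longrightarrow> v x ! 0"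
proof (induction rule: Cax.induct)
  case (A9 a)
  then show ?case using dDisj dNeg Bn_01[OF vB n1] by simp
next
  case (A10 a)
  then show ?case using dImp dNeg dNeg1 by simp
next
  case (A11 a b)
  have "v a ! 0 \<and> v (Neg a) ! 0 \<longrightarrow> v a \<notin> Boo n" using dNeg Boo_iff[OF n1 vB] by simp
  then show ?case using dImp nboo_cwb by auto
next
  case (A12 a b)
  show ?case
  proof (cases "v (Conj (cwb a n) (cwb b n)) ! 0")
    case True
    then have "v a \<in> Boo n" "v b \<in> Boo n" using dConj nboo_cwb by auto
    then have "v (Conj a b) \<in> Boo n" "v (Disj a b) \<in> Boo n" "v (Imp a b) \<in> Boo n"
      using binM_Boo vConj vDisj vImp by blast+
    then show ?thesis using dImp dConj boo_cwb by simp
  next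
    case False then show ?thesis using dImp by simp
  qed
qed (simp_all add: dImp dConj dDisj)

lemma designated: "v x \<in> Dn n \<longleftrightarrow> v x ! 0"
  using vB by (simp add: Dn_def)

end

lemma soundness:
  assumes n2: "2 \<le> n" and d: "Cder n \<Gamma> \<phi>"
  shows "RNcons n \<Gamma> \<phi>"
  unfolding RNcons_def
proof (intro ballI impI)
  fix v assume vF: "v \<in> FC n" and g: "\<forall>g\<in>\<Gamma>. v g \<in> Dn n"
  from d show "v \<phi> \<in> Dn n"
  proof (induction rule: Cder.induct)
    case (prem a) then show ?case using g by blast
  next
    case (ax a) then show ?case using ax_sound[OF n2 vF] designated[OF n2 vF] by blast
  next
    case (mp a b) then show ?case using dImp[OF n2 vF] designated[OF n2 vF] by metis
  qed
qed




fun pv :: "fm set \<Rightarrow> fm \<Rightarrow> nat \<Rightarrow> bool" where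
  "pv M a 0 = (a \<in> M)"
| "pv M a (Suc 0) = (Neg a \<in> M)"
| "pv M a (Suc (Suc j)) = (cpow a (Suc j) \<in> M)"

definition cval :: "nat \<Rightarrow> fm set \<Rightarrow> fm \<Rightarrow> bool list" where
  "cval n M a = map (pv M a) [0..<Suc n]"

lemma cval_len: "length (cval n M a) = Suc n" by (simp add: cval_def)
lemma cval_nth: "j \<le> n \<Longrightarrow> cval n M a ! j = pv M a j"
  by (simp add: cval_def nth_map_upt del: upt_Suc)

context
  fixes n M \<phi>
  assumes mx: "maxt n M \<phi>" and n2: "2 \<le> n"
begin

lemma n1': "1 \<le> n" using n2 by simp

lemma c0: "cval n M a ! 0 = (a \<in> M)" using cval_nth[of 0 n M a] by simp
lemma c1: "cval n M a ! 1 = (Neg a \<in> M)" using cval_nth[of 1 n M a] n2 by simp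
lemma cSS: "Suc (Suc j) \<le> n \<Longrightarrow> cval n M a ! Suc (Suc j) = (cpow a (Suc j) \<in> M)"
  using cval_nth[of "Suc (Suc j)" n M a] by simp

lemma good_from: "x \<notin> M \<or> Neg x \<notin> M \<Longrightarrow> 1 \<le> m \<Longrightarrow> cpow x m \<in> M"
  using good_all[OF mx] by blast

lemma cval_B: "cval n M a \<in> Bn n"
  unfolding Bn_def
proof (intro CollectI conjI allI impI)
  show "length (cval n M a) = Suc n" by (rule cval_len)
  fix k assume k: "1 \<le> k \<and> k \<le> n"
  show "(\<forall>i<k. cval n M a ! i) \<or> cval n M a ! k"
  proof (cases "k = 1")
    case True then show ?thesis using emM[OF mx, of a] c0 c1 by auto
  next
    case False
    then obtain k' where kk: "k = Suc (Suc k')" using k by (metis One_nat_def Suc_le_D le_antisym not0_implies_Suc)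
    have ck: "cval n M a ! k = (cpow a (Suc k') \<in> M)" using cSS k kk by simp
    show ?thesis
    proof (cases "\<forall>i<k. cval n M a ! i")
      case True then show ?thesis by simp
    next
      case False
      then obtain i where i: "i < k" "\<not> cval n M a ! i" by blast
      have "cpow a (Suc k') \<in> M"
      proof (cases i)
        case 0
        then have "a \<notin> M" using i c0 by simp
        then show ?thesis using good_from[of a "Suc k'"] by simp
      next
        case (Suc i')
        show ?thesis
        proof (cases i')
          case 0
          then have "Neg a \<notin> M" using i c1 Suc by simp
          then show ?thesis using good_from[of a "Suc k'"] by simp
        next
          case (Suc j)
          then have ij: "i = Suc (Suc j)" using \<open>i = Suc i'\<close> by simp
          then have "cpow a (Suc j) \<notin> M" using i cSS k by simp
          then have "cpow (cpow a (Suc j)) (k' - j) \<in> M" using good_from ij i kk by simp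
          moreover have "Suc j + (k' - j) = Suc k'" using ij i kk by simp
          ultimately show ?thesis using cpow_add by metis
        qed
      qed
      then show ?thesis using ck by simp
    qed
  qed
qed

lemma cval_Boo: "cval n M a \<in> Boo n \<longleftrightarrow> \<not> (a \<in> M \<and> Neg a \<in> M)"
  using Boo_iff[OF n1' cval_B] c0 c1 by simp

lemma a12M: "cwb a n \<in> M \<Longrightarrow> cwb b n \<in> M \<Longrightarrow>
   cwb (Conj a b) n \<in> M \<and> cwb (Disj a b) n \<in> M \<and> cwb (Imp a b) n \<in> M"
proof -
  assume "cwb a n \<in> M" "cwb b n \<in> M"
  then have "Conj (cwb a n) (cwb b n) \<in> M" using conjM[OF mx] by blast
  then have "Conj (cwb (Conj a b) n) (Conj (cwb (Disj a b) n) (cwb (Imp a b) n)) \<in> M"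
    using mpM[OF mx] ax_in[OF mx Cax.A12[of n a b]] by blast
  then show ?thesis using conjM[OF mx] by blast
qed

lemma boo_good: "cval n M a \<in> Boo n \<Longrightarrow> cwb a n \<in> M"
  using cval_Boo good_cwb[OF mx n1'] by blast

lemma bin_case:
  assumes c: "c \<in> {Conj a b, Disj a b, Imp a b}" and mem: "c \<in> M \<longleftrightarrow> f (a \<in> M) (b \<in> M)"
  shows "cval n M c \<in> binM n f (cval n M a) (cval n M b)"
proof -
  have c0': "cval n M c ! 0 = f (cval n M a ! 0) (cval n M b ! 0)" using mem c0 by simp
  show ?thesis
  proof (cases "cval n M a \<in> Boo n \<and> cval n M b \<in> Boo n")
    case True
    then have "cwb a n \<in> M" "cwb b n \<in> M" using boo_good by auto
    then have "cwb c n \<in> M" using a12M c by blast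
    then have "cval n M c \<in> Boo n" using cval_Boo a11M[OF mx] by blast
    then show ?thesis using True c0' by (simp add: binM_def)
  next
    case False
    then show ?thesis using cval_B c0' by (auto simp: binM_def)
  qed
qed

lemma cval_valuation: "valuation n (cval n M)"
  unfolding valuation_def
proof (intro conjI allI)
  fix a show "cval n M a \<in> Bn n" by (rule cval_B)
next
  fix a show "cval n M (Neg a) \<in> negM n (cval n M a)"
    using cval_B c0 c1 nnM[OF mx] by (simp add: negM_def)
next
  fix a b show "cval n M (Conj a b) \<in> binM n (\<and>) (cval n M a) (cval n M b)"
    by (rule bin_case) (auto simp: conjM[OF mx])
next
  fix a b show "cval n M (Disj a b) \<in> binM n (\<or>) (cval n M a) (cval n M b)"
    by (rule bin_case) (auto simp: disjM[OF mx])
next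
  fix a b show "cval n M (Imp a b) \<in> binM n (\<longrightarrow>) (cval n M a) (cval n M b)"
    by (rule bin_case) (auto simp: impM[OF mx n1'])
qed

lemma all_cpow_contra: "a \<in> M \<Longrightarrow> Neg a \<in> M \<Longrightarrow> \<forall>k. 1 \<le> k \<and> k \<le> n \<longrightarrow> cpow a k \<in> M \<Longrightarrow> False"
  using cwbM[OF mx n1'] a11M[OF mx] by blast

lemma FC_0: "cval n M a = tn n 0 \<Longrightarrow> cval n M (Conj a (Neg a)) = Tn n"
proof -
  assume h: "cval n M a = tn n 0"
  have e0: "cval n M a ! 0 = tn n 0 ! 0" and e1: "cval n M a ! 1 = tn n 0 ! 1" using h by simp_all
  have "a \<in> M" using e0 c0[of a] tn_nth[of 0 n 0] by simp
  moreover have "Neg a \<in> M" using e1 c1[of a] tn_nth[of 1 n 0] n2 by simp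
  moreover have "cpow a 1 \<notin> M"
  proof -
    have "cval n M a ! Suc (Suc 0) = tn n 0 ! Suc (Suc 0)" using h by simp
    then show ?thesis using cSS[of 0 a] tn_nth[of "Suc (Suc 0)" n 0] n2 by simp
  qed
  ultimately have "Conj a (Neg a) \<in> M" "Neg (Conj a (Neg a)) \<notin> M" using conjM[OF mx] by auto
  then show ?thesis using Bn_T[OF n1' cval_B] c0 c1 by simp
qed

lemma FC_k:
  assumes k: "1 \<le> k" "k \<le> n - 1" and h: "cval n M a = tn n k"
  shows "cval n M (Conj a (Neg a)) \<in> In n \<and> cval n M (cpow a 1) = tn n (k - 1)"
proof -
  have tk: "\<And>j. j \<le> n \<Longrightarrow> cval n M a ! j = (k = n - 1 \<or> j \<noteq> Suc (Suc k))"
    using h tn_nth by simp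
  have aM: "a \<in> M" using tk[of 0] c0 by simp
  have naM: "Neg a \<in> M" using tk[of 1] c1 n2 by simp
  have p1: "cpow a 1 \<in> M" using tk[of "Suc (Suc 0)"] cSS[of 0 a] n2 k by simp
  have X: "Conj a (Neg a) \<in> M" using aM naM conjM[OF mx] by blast
  have "cval n M (Conj a (Neg a)) \<notin> Boo n" using cval_Boo X p1 by simp
  then have I: "cval n M (Conj a (Neg a)) \<in> In n" using cval_B by (simp add: In_def)
  have pa: "(cpow a (Suc j) \<in> M) = (k = n - 1 \<or> j \<noteq> k)" if "Suc (Suc j) \<le> n" for j
    using tk[of "Suc (Suc j)"] cSS[of j a] that by simp
  have np1: "Neg (cpow a 1) \<in> M"
  proof (rule ccontr)
    assume "Neg (cpow a 1) \<notin> M"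
    then have "\<And>m. 1 \<le> m \<Longrightarrow> cpow (cpow a 1) m \<in> M" using good_from by blast
    then have "cpow a m \<in> M" if "1 \<le> m" for m
    proof (cases "m = 1")
      case True then show ?thesis using p1 by simp
    next
      case False
      then have "cpow (cpow a 1) (m - 1) \<in> M" using \<open>\<And>m. 1 \<le> m \<Longrightarrow> cpow (cpow a 1) m \<in> M\<close> that by simp
      moreover have "1 + (m - 1) = m" using that by simp
      ultimately show ?thesis using cpow_add[of a 1 "m - 1"] by simp
    qed
    then show False using all_cpow_contra aM naM by blast
  qed
  have kne: "k - 1 \<noteq> n - 1" using k by simp
  have "cval n M (cpow a 1) = tn n (k - 1)"
  proof (rule list_eqI[OF cval_len len_tn])
    fix j assume j: "j \<le> n"
    show "cval n M (cpow a 1) ! j = tn n (k - 1) ! j"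
    proof (cases j)
      case 0 then show ?thesis using c0 p1 tn_nth[OF j] by simp
    next
      case (Suc j1)
      show ?thesis
      proof (cases j1)
        case 0 then show ?thesis using c1 np1 tn_nth[OF j] Suc by simp
      next
        case (Suc j')
        then have jj: "j = Suc (Suc j')" using \<open>j = Suc j1\<close> by simp
        have lhs: "cval n M (cpow a 1) ! j = (cpow a (Suc (Suc j')) \<in> M)"
          using cSS[of j' "cpow a 1"] j jj cpow_add[of a 1 "Suc j'"] by simp
        have rhs: "tn n (k - 1) ! j = (Suc j' \<noteq> k)"
          using tn_nth[OF j, of "k - 1"] kne jj k by auto
        show ?thesis
        proof (cases "Suc (Suc (Suc j')) \<le> n")
          case True
          then have "(cpow a (Suc (Suc j')) \<in> M) = (k = n - 1 \<or> Suc j' \<noteq> k)" using pa[of "Suc j'"] by simp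
          moreover have "k = n - 1 \<longrightarrow> Suc j' \<noteq> k" using True by linarith
          ultimately show ?thesis using lhs rhs by blast
        next
          case False
          then have jn: "Suc (Suc j') = n" using j jj by simp
          show ?thesis
          proof (cases "k = n - 1")
            case True
            have "cpow a n \<notin> M"
            proof
              assume an: "cpow a n \<in> M"
              have "\<forall>m. 1 \<le> m \<and> m \<le> n \<longrightarrow> cpow a m \<in> M"
              proof (intro allI impI)
                fix m assume m: "1 \<le> m \<and> m \<le> n"
                show "cpow a m \<in> M"
                proof (cases "m = n")
                  case True then show ?thesis using an by simp
                next
                  case False
                  have mm: "m = Suc (m - 1)" "Suc (Suc (m - 1)) \<le> n" using m False by auto
                  then have "cpow a (Suc (m - 1)) \<in> M" using pa[of "m - 1"] True by simp
                  then show ?thesis using mm(1) by simp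
                qed
              qed
              then show False using all_cpow_contra aM naM by blast
            qed
            then show ?thesis using lhs rhs jn True n2 by auto
          next
            case False
            then have kl: "k < n - 1" using k by simp
            then have "cpow a (Suc k) \<notin> M" using pa[of k] by simp
            then have "cpow (cpow a (Suc k)) (n - Suc k) \<in> M" using good_from kl by simp
            moreover have "Suc k + (n - Suc k) = n" using kl by simp
            ultimately have "cpow a n \<in> M" using cpow_add by metis
            then show ?thesis using lhs rhs jn kl by auto
          qed
        qed
      qed
    qed
  qed
  then show ?thesis using I by simp
qed

lemma cval_FC: "cval n M \<in> FC n"
  unfolding FC_def using cval_valuation FC_0 FC_k by blast

end

lemma completeness:
  assumes n2: "2 \<le> n" and r: "RNcons n \<Gamma> \<phi>"
  shows "Cder n \<Gamma> \<phi>"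
proof (rule ccontr)
  assume "\<not> Cder n \<Gamma> \<phi>"
  then obtain M where M: "\<Gamma> \<subseteq> M" "\<not> Cder n M \<phi>" "\<forall>a. a \<notin> M \<longrightarrow> Cder n (insert a M) \<phi>"
    using lindenbaum by blast
  then have mx: "maxt n M \<phi>" by (simp add: maxt_def)
  have vF: "cval n M \<in> FC n" using cval_FC[OF mx n2] .
  have "\<forall>g\<in>\<Gamma>. cval n M g \<in> Dn n" using M(1) c0[OF mx n2] cval_B[OF mx n2] by (auto simp: Dn_def)
  then have "cval n M \<phi> \<in> Dn n" using r vF by (simp add: RNcons_def)
  then have "\<phi> \<in> M" using c0[OF mx n2] by (simp add: Dn_def)
  then have "Cder n M \<phi>" by (rule Cder.prem)
  then show False using M(2) by simp
qed



theorem mainTheorem13: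
  fixes n :: nat and \<Gamma> :: "fm set" and \<phi> :: fm
  assumes "n \<ge> 2"
  shows "Cder n \<Gamma> \<phi> \<longleftrightarrow> RNcons n \<Gamma> \<phi>"
  using soundness[OF assms] completeness[OF assms] by blast

end
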